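(* Let $\mu$ be a probability measure on $\mathbb{R}^n$ that is $\alpha$-regular for some $\alpha\geq 1$. Then for every $t\geq 2$, $$B_t(\mu)\subseteq 4e\alpha\, Z_t(\mu).$$
   Context: $\mu$ is $\alpha$-regular if for all $s\geq t\geq 2$ and all $v\in\mathbb{R}^n$, $\left(\int|\langle v,x\rangle|^s d\mu(x)\right)^{1/s}\leq \alpha\frac{s}{t}\left(\int|\langle v,x\rangle|^t d\mu(x)\right)^{1/t}$. $\Lambda_\mu(v)=\ln\int e^{\langle v,x\rangle}d\mu(x)$ and the Cramér transform is $\Lambda_\mu^*(v)=\sup_{u\in\mathbb{R}^n}\{\langle v,u\rangle-\Lambda_\mu(u)\}$; $B_t(\mu)=\{v:\Lambda^*_\mu(v)\leq t\}$. $Z_t(\mu)$ is the convex body with support function $h_{Z_t(\mu)}(y)=\left(\int|\langle x,y\rangle|^t d\mu(x)\right)^{1/t}$; equivalently $Z_t(\mu)=\{x: |\langle v,x\rangle|^t\leq \int|\langle v,y\rangle|^t d\mu(y)\ \forall v\}$. *)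

theory Defs
  imports "HOL-Probability.Probability"
begin

definition moment_dir :: "'a::euclidean_space measure \<Rightarrow> 'a \<Rightarrow> real \<Rightarrow> ennreal" where
  "moment_dir M v t = (\<integral>\<^sup>+ x. ennreal (\<bar>v \<bullet> x\<bar> powr t) \<partial>M)"

text \<open>When the t-th moment is infinite the right-hand side is infinite
  and the inequality holds trivially; otherwise the s-th moment must be finite and the
  inequality of the L^s and L^t norms holds.\<close>
definition regular :: "real \<Rightarrow> 'a::euclidean_space measure \<Rightarrow> bool" where
  "regular \<alpha> M \<longleftrightarrow> (\<forall>s t v. 2 \<le> t \<and> t \<le> s \<and> moment_dir M v t < \<infinity> \<longrightarrow>
      moment_dir M v s < \<infinity> \<and>
      enn2real (moment_dir M v s) powr (1/s) \<le> \<alpha> * (s/t) * enn2real (moment_dir M v t) powr (1/t))"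

definition log_laplace :: "'a::euclidean_space measure \<Rightarrow> 'a \<Rightarrow> ereal" where
  "log_laplace M u = (let I = (\<integral>\<^sup>+ x. ennreal (exp (u \<bullet> x)) \<partial>M) in
      if I = \<infinity> then \<infinity> else ereal (ln (enn2real I)))"

definition cramer :: "'a::euclidean_space measure \<Rightarrow> 'a \<Rightarrow> ereal" where
  "cramer M v = (SUP u. ereal (v \<bullet> u) - log_laplace M u)"

definition B_set :: "real \<Rightarrow> 'a::euclidean_space measure \<Rightarrow> 'a set" where
  "B_set t M = {v. cramer M v \<le> ereal t}"

definition Z_set :: "real \<Rightarrow> 'a::euclidean_space measure \<Rightarrow> 'a set" where
  "Z_set t M = {x. \<forall>v. ennreal (\<bar>v \<bullet> x\<bar> powr t) \<le> moment_dir M v t}"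

end

theory Submission
  imports Defs
begin

lemma meas_inner:
  fixes M :: "'a::euclidean_space measure"
  assumes "sets M = sets borel"
  shows "(\<lambda>x. w \<bullet> x) \<in> borel_measurable M"
proof -
  have "(\<lambda>x. x) \<in> M \<rightarrow>\<^sub>M (borel :: 'a measure)" by (rule measurable_ident_sets[OF assms])
  then show ?thesis by (intro borel_measurable_inner) auto
qed

lemma moment_k_bound:
  fixes M :: "'a::euclidean_space measure"
  assumes P: "prob_space M" and S: "sets M = sets borel"
    and R: "regular \<alpha> M" and t: "t \<ge> 2" and al: "\<alpha> \<ge> 1"
    and mt: "moment_dir M w t < \<infinity>" and H: "H > 0"
    and hH: "enn2real (moment_dir M w t) powr (1/t) \<le> H"
  shows "(\<integral>\<^sup>+ x. ennreal ((\<bar>w \<bullet> x\<bar>/H)^k) \<partial>M) \<le> ennreal (2 + (\<alpha>*k/t)^k)"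
proof -
  interpret prob_space M by fact
  note [measurable] = meas_inner[OF S]
  define m where "m = enn2real (moment_dir M w t)"
  have m0: "m \<ge> 0" unfolding m_def by simp
  have mE: "moment_dir M w t = ennreal m" unfolding m_def using mt by simp
  have mH: "m \<le> H powr t"
  proof -
    have "m = (m powr (1/t)) powr t" using t m0 by (simp add: powr_powr)
    also have "\<dots> \<le> H powr t" using hH m_def t by (intro powr_mono2) auto
    finally show ?thesis .
  qed
  show ?thesis
  proof (cases "real k < t")
    case True
    have pw: "ennreal ((\<bar>w \<bullet> x\<bar>/H)^k) \<le> 1 + ennreal (\<bar>w \<bullet> x\<bar> powr t) * ennreal (1 / H powr t)" for x
    proof -
      let ?y = "\<bar>w \<bullet> x\<bar>/H"
      have y0: "?y \<ge> 0" using H by simp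
      have "?y ^ k \<le> 1 + ?y powr t"
      proof (cases "?y \<le> 1")
        case True
        then have "?y ^ k \<le> 1" using y0 by (simp add: power_le_one)
        moreover have "0 \<le> ?y powr t" by simp
        ultimately show ?thesis by linarith
      next
        case False
        then have "?y ^ k = ?y powr real k" by (simp add: powr_realpow)
        also have "\<dots> \<le> ?y powr t" using False True by (intro powr_mono) auto
        finally show ?thesis by simp
      qed
      also have "?y powr t = \<bar>w \<bullet> x\<bar> powr t * (1 / H powr t)"
        using H by (simp add: powr_divide)
      finally have "?y ^ k \<le> 1 + \<bar>w \<bullet> x\<bar> powr t * (1 / H powr t)" .
      then have "ennreal (?y ^ k) \<le> ennreal (1 + \<bar>w \<bullet> x\<bar> powr t * (1 / H powr t))"
        by (rule ennreal_leI)
      also have "\<dots> = 1 + ennreal (\<bar>w \<bullet> x\<bar> powr t) * ennreal (1 / H powr t)"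
        using H by (subst ennreal_plus) (auto simp: ennreal_mult[symmetric])
      finally show ?thesis .
    qed
    have "(\<integral>\<^sup>+ x. ennreal ((\<bar>w \<bullet> x\<bar>/H)^k) \<partial>M) \<le> (\<integral>\<^sup>+ x. 1 + ennreal (\<bar>w \<bullet> x\<bar> powr t) * ennreal (1 / H powr t) \<partial>M)"
      by (intro nn_integral_mono pw)
    also have "\<dots> = (\<integral>\<^sup>+ x. 1 \<partial>M) + (\<integral>\<^sup>+ x. ennreal (\<bar>w \<bullet> x\<bar> powr t) * ennreal (1 / H powr t) \<partial>M)"
      by (intro nn_integral_add) auto
    also have "\<dots> = 1 + moment_dir M w t * ennreal (1 / H powr t)"
      unfolding moment_dir_def
      by (subst nn_integral_multc) (auto simp: emeasure_space_1)
    also have "\<dots> = ennreal (1 + m / H powr t)" using m0 H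
      by (simp add: mE ennreal_mult'[symmetric] ennreal_plus[symmetric])
    also have "\<dots> \<le> ennreal 2"
      by (rule ennreal_leI) (use mH H in \<open>simp add: divide_le_eq\<close>)
    also have "\<dots> \<le> ennreal (2 + (\<alpha>*k/t)^k)"
      using al t by (intro ennreal_leI) simp
    finally show ?thesis .
  next
    case False
    then have kt: "t \<le> real k" by simp
    with t have k0: "k \<noteq> 0" by auto
    from R kt t mt have Rk: "moment_dir M w k < \<infinity>"
      and Rb: "enn2real (moment_dir M w k) powr (1/k) \<le> \<alpha> * (k/t) * enn2real (moment_dir M w t) powr (1/t)"
      unfolding regular_def by auto
    define mk where "mk = enn2real (moment_dir M w k)"
    have mk0: "mk \<ge> 0" unfolding mk_def by simp
    have mkE: "moment_dir M w k = ennreal mk" unfolding mk_def using Rk by simp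
    have "mk = (mk powr (1/k)) powr k" using k0 mk0 by (simp add: powr_powr)
    also have "\<dots> \<le> (\<alpha> * (k/t) * H) powr k"
    proof (intro powr_mono2)
      have "\<alpha> * (k/t) * enn2real (moment_dir M w t) powr (1/t) \<le> \<alpha> * (k/t) * H"
        using hH al t by (intro mult_left_mono) auto
      then show "mk powr (1/k) \<le> \<alpha> * (k/t) * H" unfolding mk_def using Rb by linarith
    qed (use mk0 in auto)
    also have "\<dots> = (\<alpha> * (k/t) * H) ^ k" using al t H k0 by (intro powr_realpow) auto
    finally have mkb: "mk \<le> (\<alpha> * (k/t) * H) ^ k" .
    have "(\<integral>\<^sup>+ x. ennreal ((\<bar>w \<bullet> x\<bar>/H)^k) \<partial>M) = (\<integral>\<^sup>+ x. ennreal (\<bar>w \<bullet> x\<bar> powr k) * ennreal (1 / H^k) \<partial>M)"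
    proof (intro nn_integral_cong)
      fix x
      have "(\<bar>w \<bullet> x\<bar>/H)^k = \<bar>w \<bullet> x\<bar> powr k * (1 / H^k)"
        using k0 by (simp add: powr_realpow' power_divide)
      then show "ennreal ((\<bar>w \<bullet> x\<bar>/H)^k) = ennreal (\<bar>w \<bullet> x\<bar> powr k) * ennreal (1 / H^k)"
        using H by (simp add: ennreal_mult[symmetric])
    qed
    also have "\<dots> = moment_dir M w k * ennreal (1 / H^k)"
      unfolding moment_dir_def by (subst nn_integral_multc) auto
    also have "\<dots> = ennreal (mk / H^k)" using mk0 H
      by (simp add: mkE ennreal_mult'[symmetric])
    also have "\<dots> \<le> ennreal (2 + (\<alpha>*k/t)^k)"
    proof (rule ennreal_leI)
      have "mk / H^k \<le> (\<alpha> * (k/t) * H) ^ k / H^k" using mkb H by (simp add: divide_right_mono)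
      also have "\<dots> = (\<alpha>*k/t)^k"
      proof -
        have "(\<alpha> * (k/t) * H) ^ k = (\<alpha>*k/t)^k * H^k" by (simp add: power_mult_distrib[symmetric])
        then show ?thesis using H by simp
      qed
      finally show "mk / H^k \<le> 2 + (\<alpha>*k/t)^k" by simp
    qed
    finally show ?thesis .
  qed
qed

lemma pow_fact_le: "real k ^ k / fact k \<le> exp (real k)"
proof -
  have s: "(\<lambda>n. real k ^ n / fact n) sums exp (real k)"
    using exp_converges[of "real k"] by (simp add: divide_inverse mult.commute)
  have "sum (\<lambda>n. real k ^ n / fact n) {k} \<le> (\<Sum>n. real k ^ n / fact n)"
    by (rule sum_le_suminf[OF sums_summable[OF s]]) auto
  then show ?thesis using sums_unique[OF s] by simp
qed

lemma term_half: "(real k / (2 * exp 1)) ^ k / fact k \<le> (1/2) ^ k"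
proof -
  have "(real k / (2 * exp 1)) ^ k / fact k = (real k ^ k / fact k) / (2 * exp 1) ^ k"
    by (simp add: power_divide)
  also have "\<dots> \<le> exp (real k) / (2 * exp 1) ^ k"
    by (intro divide_right_mono pow_fact_le) auto
  also have "\<dots> = (1/2) ^ k"
    by (simp add: power_mult_distrib exp_of_nat_mult[symmetric] power_divide)
  finally show ?thesis .
qed


lemma exp_bound:
  fixes M :: "'a::euclidean_space measure"
  assumes P: "prob_space M" and S: "sets M = sets borel"
    and R: "regular \<alpha> M" and t: "t \<ge> 2" and al: "\<alpha> \<ge> 1"
    and mt: "moment_dir M w t < \<infinity>" and H: "H > 0"
    and hH: "enn2real (moment_dir M w t) powr (1/t) \<le> H"
    and lam: "l = t / (2 * exp 1 * \<alpha>)"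
  shows "(\<integral>\<^sup>+ x. ennreal (exp (l * (w \<bullet> x) / H)) \<partial>M) \<le> ennreal (2 * exp l + 2)"
proof -
  note [measurable] = meas_inner[OF S]
  have l0: "l > 0" using lam t al by simp
  define f where "f k x = ennreal ((l * \<bar>w \<bullet> x\<bar> / H) ^ k / fact k)" for k x
  have pw: "ennreal (exp (l * (w \<bullet> x) / H)) \<le> (\<Sum>k. f k x)" for x
  proof -
    have "exp (l * (w \<bullet> x) / H) \<le> exp (l * \<bar>w \<bullet> x\<bar> / H)"
      using l0 H by (auto intro!: divide_right_mono mult_left_mono)
    moreover have "(\<Sum>k. f k x) = ennreal (exp (l * \<bar>w \<bullet> x\<bar> / H))"
      unfolding f_def
      by (rule suminf_ennreal_eq) (use l0 H exp_converges[of "l * \<bar>w \<bullet> x\<bar> / H"] in \<open>auto simp: divide_inverse mult.commute\<close>)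
    ultimately show ?thesis by (simp add: ennreal_leI)
  qed
  have tb: "integral\<^sup>N M (f k) \<le> ennreal (2 * (l ^ k / fact k) + (1/2) ^ k)" for k
  proof -
    have "integral\<^sup>N M (f k) = (\<integral>\<^sup>+ x. ennreal (l ^ k / fact k) * ennreal ((\<bar>w \<bullet> x\<bar> / H) ^ k) \<partial>M)"
      unfolding f_def
    proof (intro nn_integral_cong)
      fix x
      have "(l * \<bar>w \<bullet> x\<bar> / H) ^ k / fact k = (l ^ k / fact k) * ((\<bar>w \<bullet> x\<bar> / H) ^ k)"
        by (simp add: power_mult_distrib power_divide)
      then show "ennreal ((l * \<bar>w \<bullet> x\<bar> / H) ^ k / fact k) = ennreal (l ^ k / fact k) * ennreal ((\<bar>w \<bullet> x\<bar> / H) ^ k)"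
        using l0 H by (simp only: ennreal_mult[symmetric] divide_nonneg_nonneg zero_le_power abs_ge_zero fact_ge_zero less_imp_le)
    qed
    also have "\<dots> = ennreal (l ^ k / fact k) * (\<integral>\<^sup>+ x. ennreal ((\<bar>w \<bullet> x\<bar> / H) ^ k) \<partial>M)"
      by (rule nn_integral_cmult) auto
    also have "\<dots> \<le> ennreal (l ^ k / fact k) * ennreal (2 + (\<alpha>*k/t)^k)"
      by (intro mult_left_mono moment_k_bound[OF P S R t al mt H hH]) auto
    also have "\<dots> = ennreal (2 * (l ^ k / fact k) + (real k / (2 * exp 1)) ^ k / fact k)"
    proof -
      have "l * (\<alpha>*k/t) = real k / (2 * exp 1)" using lam t al by (simp add: field_simps)
      then have eq: "l ^ k / fact k * (2 + (\<alpha>*k/t)^k) = 2 * (l ^ k / fact k) + (real k / (2 * exp 1)) ^ k / fact k"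
        by (simp add: algebra_simps power_mult_distrib[symmetric])
      have nn: "0 \<le> l ^ k / fact k" "0 \<le> 2 + (\<alpha>*k/t)^k" using l0 al t by auto
      show ?thesis by (subst ennreal_mult[symmetric, OF nn]) (simp only: eq)
    qed
    also have "\<dots> \<le> ennreal (2 * (l ^ k / fact k) + (1/2) ^ k)"
      using term_half[of k] by (intro ennreal_leI) simp
    finally show ?thesis .
  qed
  have sums: "(\<lambda>k. 2 * (l ^ k / fact k) + (1/2::real) ^ k) sums (2 * exp l + 2)"
  proof -
    have "(\<lambda>k. l ^ k / fact k) sums exp l"
      using exp_converges[of l] by (simp add: divide_inverse mult.commute)
    moreover have "(\<lambda>k. (1/2::real) ^ k) sums 2"
      using geometric_sums[of "1/2::real"] by simp
    ultimately show ?thesis by (intro sums_add sums_mult)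
  qed
  have "(\<integral>\<^sup>+ x. ennreal (exp (l * (w \<bullet> x) / H)) \<partial>M) \<le> (\<integral>\<^sup>+ x. (\<Sum>k. f k x) \<partial>M)"
    by (intro nn_integral_mono pw)
  also have "\<dots> = (\<Sum>k. integral\<^sup>N M (f k))"
    by (rule nn_integral_suminf) (simp add: f_def)
  also have "\<dots> \<le> (\<Sum>k. ennreal (2 * (l ^ k / fact k) + (1/2) ^ k))"
    by (intro suminf_le tb) auto
  also have "\<dots> = ennreal (2 * exp l + 2)"
    by (rule suminf_ennreal_eq[OF _ sums]) (use l0 in auto)
  finally show ?thesis .
qed


lemma ln4_le: "ln (4::real) \<le> 3/2"
proof -
  have "(2::real) \<le> exp (3/4)"
    using exp_lower_Taylor_quadratic[of "3/4::real"] by (simp add: power2_eq_square)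
  then have "ln (2::real) \<le> ln (exp (3/4))" by (subst ln_le_cancel_iff) auto
  then have "ln (2::real) \<le> 3/4" by simp
  moreover have "ln (4::real) = 2 * ln 2"
    using ln_realpow[of 2 2] by simp
  ultimately show ?thesis by simp
qed

lemma dir_bound:
  fixes M :: "'a::euclidean_space measure"
  assumes P: "prob_space M" and S: "sets M = sets borel"
    and R: "regular \<alpha> M" and t: "t \<ge> 2" and al: "\<alpha> \<ge> 1"
    and mt: "moment_dir M w t < \<infinity>" and H: "H > 0"
    and hH: "enn2real (moment_dir M w t) powr (1/t) \<le> H"
    and v: "cramer M v \<le> ereal t"
  shows "w \<bullet> v \<le> 4 * exp 1 * \<alpha> * H"
proof -
  define l where "l = t / (2 * exp 1 * \<alpha>)"
  have l0: "l > 0" using t al by (simp add: l_def)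
  have e2: "exp (1::real) \<ge> 2" using exp_ge_add_one_self[of "1::real"] by simp
  define u where "u = (l / H) *\<^sub>R w"
  define I where "I = (\<integral>\<^sup>+ x. ennreal (exp (u \<bullet> x)) \<partial>M)"
  define B where "B = 2 * exp l + 2"
  have "I = (\<integral>\<^sup>+ x. ennreal (exp (l * (w \<bullet> x) / H)) \<partial>M)"
    unfolding I_def u_def by (simp add: mult.commute)
  also have "\<dots> \<le> ennreal B"
    unfolding B_def by (rule exp_bound[OF P S R t al mt H hH]) (simp add: l_def)
  finally have IB: "I \<le> ennreal B" .
  then have Ifin: "I \<noteq> \<infinity>" by (metis ennreal_neq_top infinity_ennreal_def neq_top_trans)
  have LL: "log_laplace M u = ereal (ln (enn2real I))"
    unfolding log_laplace_def I_def[symmetric] using Ifin by simp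
  have "ereal (v \<bullet> u) - log_laplace M u \<le> cramer M v"
    unfolding cramer_def by (rule SUP_upper) simp
  with v LL have "ereal (v \<bullet> u) - ereal (ln (enn2real I)) \<le> ereal t" by (metis order_trans)
  then have c1: "v \<bullet> u \<le> t + ln (enn2real I)" by simp
  have B1: "B \<ge> 1" unfolding B_def using exp_gt_zero[of l] by linarith
  have "ln (enn2real I) \<le> ln B"
  proof (cases "enn2real I = 0")
    case True then show ?thesis using B1 by simp
  next
    case False
    then have "enn2real I > 0" by (simp add: order_less_le)
    moreover have "enn2real I \<le> B" using IB B1 by (intro enn2real_leI) auto
    ultimately show ?thesis by simp
  qed
  also have "ln B \<le> ln (4 * exp l)"
  proof -
    have "1 \<le> exp l" using l0 by simp
    then have "B \<le> 4 * exp l" unfolding B_def by linarith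
    then show ?thesis using B1 by (subst ln_le_cancel_iff) auto
  qed
  also have "\<dots> = ln 4 + l" by (simp add: ln_mult)
  finally have c2: "l / H * (w \<bullet> v) \<le> t + ln 4 + l"
    using c1 unfolding u_def by (simp add: inner_commute)
  have lt: "l \<le> t / 4"
  proof -
    have "4 \<le> 2 * exp 1 * \<alpha>" using e2 al mult_mono[of 2 "exp 1" 1 \<alpha>] by (simp add: mult.commute)
    then show ?thesis unfolding l_def using t by (simp add: field_simps)
  qed
  have "l * (w \<bullet> v) \<le> H * (t + ln 4 + l)" using c2 H by (simp add: field_simps)
  also have "\<dots> \<le> H * (2 * t)" using lt ln4_le t H by (intro mult_left_mono) auto
  also have "\<dots> = l * (4 * exp 1 * \<alpha> * H)" unfolding l_def using al by (simp add: field_simps)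
  finally show ?thesis using l0 by simp
qed


theorem proposition2p3:
  fixes M :: "'a::euclidean_space measure" and \<alpha> t :: real
  assumes "prob_space M" and "sets M = sets borel"
    and "\<alpha> \<ge> 1" and "regular \<alpha> M" and "t \<ge> 2"
  shows "B_set t M \<subseteq> (\<lambda>z. (4 * exp 1 * \<alpha>) *\<^sub>R z) ` Z_set t M"
proof
  fix v assume "v \<in> B_set t M"
  then have v: "cramer M v \<le> ereal t" by (simp add: B_set_def)
  define K where "K = 4 * exp 1 * \<alpha>"
  have K0: "K > 0" unfolding K_def using assms(3) by simp
  define z where "z = (1 / K) *\<^sub>R v"
  have vz: "v = K *\<^sub>R z" unfolding z_def using K0 by simp
  have "z \<in> Z_set t M"
    unfolding Z_set_def
  proof (intro CollectI allI)
    fix w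
    show "ennreal (\<bar>w \<bullet> z\<bar> powr t) \<le> moment_dir M w t"
    proof (cases "moment_dir M w t = \<infinity>")
      case True then show ?thesis by simp
    next
      case False
      then have mt: "moment_dir M w t < \<infinity>" by (simp add: less_top)
      have mneg: "moment_dir M (-w) t = moment_dir M w t"
        unfolding moment_dir_def by simp
      define m where "m = enn2real (moment_dir M w t)"
      have m0: "m \<ge> 0" unfolding m_def by simp
      define h where "h = m powr (1/t)"
      have h0: "h \<ge> 0" unfolding h_def by simp
      have bnd: "\<bar>w \<bullet> v\<bar> \<le> K * h"
      proof (rule field_le_epsilon)
        fix e :: real assume e: "e > 0"
        define H where "H = h + e / K"
        have H0: "H > 0" unfolding H_def using h0 e K0 by (simp add: add_nonneg_pos)
        have hH: "enn2real (moment_dir M w t) powr (1/t) \<le> H"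
          unfolding H_def h_def m_def using e K0 by simp
        have "w \<bullet> v \<le> K * H"
          unfolding K_def by (rule dir_bound[OF assms(1,2,4,5,3) mt H0 hH v])
        moreover have "(-w) \<bullet> v \<le> K * H"
          unfolding K_def by (rule dir_bound[OF assms(1,2,4,5,3)]) (use mt H0 hH v mneg in auto)
        ultimately have "\<bar>w \<bullet> v\<bar> \<le> K * H" by auto
        also have "\<dots> = K * h + e" unfolding H_def using K0 by (simp add: field_simps)
        finally show "\<bar>w \<bullet> v\<bar> \<le> K * h + e" .
      qed
      have "\<bar>w \<bullet> z\<bar> = \<bar>w \<bullet> v\<bar> / K" unfolding z_def using K0 by (simp add: abs_mult)
      also have "\<dots> \<le> h" using bnd K0 by (simp add: divide_le_eq mult.commute)
      finally have "\<bar>w \<bullet> z\<bar> powr t \<le> h powr t" using assms(5) by (intro powr_mono2) auto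
      also have "h powr t = m" unfolding h_def using m0 assms(5) by (simp add: powr_powr)
      finally have "ennreal (\<bar>w \<bullet> z\<bar> powr t) \<le> ennreal m" by (rule ennreal_leI)
      also have "ennreal m = moment_dir M w t" unfolding m_def using False by (simp add: ennreal_enn2real_if)
      finally show ?thesis .
    qed
  qed
  then show "v \<in> (\<lambda>z. (4 * exp 1 * \<alpha>) *\<^sub>R z) ` Z_set t M"
    using vz unfolding K_def by blast
qed

end
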